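(* Let $k\ge 2$, let $B_k$ be the automorphism group of the binary rooted tree $X^{[k]}$ and $G_k\le B_k$ the subgroup of automorphisms acting on the leaves $X^k$ by even permutations (so $G_k\cong\mathrm{Syl}_2(A_{2^k})$). An element $g\in G_k$ belongs to $G_k'$ if and only if the index of $g$ on $X^l$ is even for every $0\le l<k-1$, and moreover the number of active vertices of $g$ on level $X^{k-1}$ lying in the subtree rooted at $v_{11}$ is even and the number of those lying in the subtree rooted at $v_{12}$ is even.
   Context: $X=\{0,1\}$; $X^{[k]}$ is the binary rooted tree with levels $X^0,\dots,X^k$; $v_{11},v_{12}$ are the two vertices of level $1$. Each automorphism has at every vertex $v$ of level $<k$ a vertex permutation in $S_2$; $v$ is active if it is nontrivial. The index of $g$ on $X^l$ is the number of active vertices of $g$ in $X^l$. *)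

theory Defs
  imports "HOL-Algebra.Sym_Groups"
begin

text \<open>Vertices of the binary rooted tree X^[k]: words over X = {0,1} (encoded as bool,
  False = 0, True = 1) of length at most k. Level X^l = words of length l; the root is [].\<close>
definition tree_verts :: "nat \<Rightarrow> bool list set" where
  "tree_verts k = {xs. length xs \<le> k}"

definition tree_aut :: "nat \<Rightarrow> (bool list \<Rightarrow> bool list) \<Rightarrow> bool" where
  "tree_aut k g \<longleftrightarrow> g permutes tree_verts k \<and>
     (\<forall>v b. length v < k \<longrightarrow> (\<exists>c. g (v @ [b]) = g v @ [c]))"

text \<open>Vertex v (of level < k) is active for g iff the vertex permutation of g at v is
  nontrivial, i.e. g does not map v0 to g(v)0.\<close>
definition active :: "(bool list \<Rightarrow> bool list) \<Rightarrow> bool list \<Rightarrow> bool" where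
  "active g v \<longleftrightarrow> g (v @ [False]) \<noteq> g v @ [False]"

definition level_index :: "(bool list \<Rightarrow> bool list) \<Rightarrow> nat \<Rightarrow> nat" where
  "level_index g l = card {v. length v = l \<and> active g v}"

definition leaf_action :: "nat \<Rightarrow> (bool list \<Rightarrow> bool list) \<Rightarrow> bool list \<Rightarrow> bool list" where
  "leaf_action k g = (\<lambda>xs. if length xs = k then g xs else xs)"

definition B_grp :: "nat \<Rightarrow> (bool list \<Rightarrow> bool list) monoid" where
  "B_grp k = \<lparr>carrier = {g. tree_aut k g}, mult = (\<circ>), one = id\<rparr>"

definition G_grp :: "nat \<Rightarrow> (bool list \<Rightarrow> bool list) monoid" where
  "G_grp k = \<lparr>carrier = {g. tree_aut k g \<and> evenperm (leaf_action k g)}, mult = (\<circ>), one = id\<rparr>"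

end

theory Submission
  imports Defs
begin


lemma fin_tv: "finite (tree_verts k)"
proof -
  have "finite {xs::bool list. set xs \<subseteq> UNIV \<and> length xs \<le> k}"
    by (rule finite_lists_length_le) simp
  thus ?thesis unfolding tree_verts_def by simp
qed

lemma fin_lev: "finite {v::bool list. length v = l}"
proof -
  have "{v::bool list. length v = l} \<subseteq> tree_verts l" by (auto simp: tree_verts_def)
  thus ?thesis using fin_tv finite_subset by blast
qed

lemma ta_perm: "tree_aut k g \<Longrightarrow> g permutes tree_verts k"
  by (simp add: tree_aut_def)

lemma ta_len0: assumes "tree_aut k g" "length v \<le> k"
  shows "length (g v) = length (g []) + length v"
  using assms(2)
proof (induction v rule: rev_induct)
  case Nil then show ?case by simp
next
  case (snoc x xs)
  then obtain c where "g (xs @ [x]) = g xs @ [c]" using assms(1) unfolding tree_aut_def by fastforce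
  then show ?case using snoc by simp
qed

lemma ta_root: assumes "tree_aut k g" shows "g [] = []"
proof -
  have "length (g (replicate k False)) = length (g []) + k" using ta_len0[OF assms, of "replicate k False"] by simp
  moreover have "replicate k False \<in> tree_verts k" by (simp add: tree_verts_def)
  then have "g (replicate k False) \<in> tree_verts k"
    using permutes_in_image[OF ta_perm[OF assms]] by blast
  ultimately show ?thesis by (simp add: tree_verts_def)
qed

lemma ta_out: assumes "tree_aut k g" "\<not> length v \<le> k" shows "g v = v"
  using ta_perm[OF assms(1)] assms(2) by (simp add: permutes_def tree_verts_def)

lemma ta_len: assumes "tree_aut k g" shows "length (g v) = length v"
  using ta_len0[OF assms, of v] ta_root[OF assms] ta_out[OF assms, of v] by (cases "length v \<le> k") auto

lemma ta_inj: assumes "tree_aut k g" shows "inj g"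
  using ta_perm[OF assms] permutes_inj by blast

lemma ta_snoc: assumes "tree_aut k g" "length v < k"
  shows "g (v @ [b]) = g v @ [b \<noteq> active g v]"
proof -
  obtain c0 where c0: "g (v @ [False]) = g v @ [c0]" using assms unfolding tree_aut_def by blast
  obtain c1 where c1: "g (v @ [True]) = g v @ [c1]" using assms unfolding tree_aut_def by blast
  have "g (v @ [False]) \<noteq> g (v @ [True])" using ta_inj[OF assms(1)] by (simp add: inj_eq)
  then have "c0 \<noteq> c1" using c0 c1 by auto
  then show ?thesis using c0 c1 unfolding active_def by (cases b; cases c0; cases c1) simp_all
qed

lemma ta_comp: assumes "tree_aut k f" "tree_aut k g" shows "tree_aut k (f \<circ> g)"
  unfolding tree_aut_def
proof (intro conjI allI impI)
  show "f \<circ> g permutes tree_verts k" using ta_perm assms permutes_compose by blast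
  fix v :: "bool list" and b :: bool assume "length v < k"
  then have l: "length (g v) < k" using ta_len[OF assms(2)] by simp
  have "(f \<circ> g) (v @ [b]) = f (g v @ [b \<noteq> active g v])" using ta_snoc[OF assms(2) \<open>length v < k\<close>] by simp
  also have "\<dots> = f (g v) @ [(b \<noteq> active g v) \<noteq> active f (g v)]" using ta_snoc[OF assms(1) l] by blast
  finally show "\<exists>c. (f \<circ> g) (v @ [b]) = (f \<circ> g) v @ [c]" by auto
qed

lemma active_comp: assumes "tree_aut k f" "tree_aut k g" "length v < k"
  shows "active (f \<circ> g) v = (active g v \<noteq> active f (g v))"
proof -
  have l: "length (g v) < k" using ta_len[OF assms(2)] assms(3) by simp
  have "(f \<circ> g) (v @ [False]) = f (g v) @ [active g v \<noteq> active f (g v)]"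
    using ta_snoc[OF assms(2,3), of False] ta_snoc[OF assms(1) l] by simp
  then show ?thesis by (simp add: active_def)
qed

lemma ta_id: "tree_aut k id"
  by (auto simp: tree_aut_def permutes_id)

lemma active_id: "\<not> active id v" by (simp add: active_def)

lemma ta_inv: assumes "tree_aut k g" shows "tree_aut k (inv_into UNIV g)"
  unfolding tree_aut_def
proof (intro conjI allI impI)
  have P: "g permutes tree_verts k" by (rule ta_perm[OF assms])
  show "inv_into UNIV g permutes tree_verts k" using permutes_inv[OF P] .
  fix v :: "bool list" and b :: bool assume lv: "length v < k"
  define v' where "v' = inv_into UNIV g v"
  have gv': "g v' = v" unfolding v'_def using permutes_inverses(1)[OF P] .
  have lv': "length v' < k" using ta_len[OF assms, of v'] gv' lv by simp
  have "g (v' @ [b \<noteq> active g v']) = v @ [b]" using ta_snoc[OF assms lv', of "b \<noteq> active g v'"] gv'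
    by (cases b; cases "active g v'") simp_all
  moreover have "inv_into UNIV g (g (v' @ [b \<noteq> active g v'])) = v' @ [b \<noteq> active g v']"
    by (rule permutes_inverses(2)[OF P])
  ultimately have "inv_into UNIV g (v @ [b]) = v' @ [b \<noteq> active g v']" by simp
  then show "\<exists>c. inv_into UNIV g (v @ [b]) = inv_into UNIV g v @ [c]" unfolding v'_def by blast
qed



fun pf :: "(bool list \<Rightarrow> bool) \<Rightarrow> bool list \<Rightarrow> bool list" where
  "pf P [] = []"
| "pf P (x # xs) = (x \<noteq> P []) # pf (\<lambda>ys. P (x # ys)) xs"

definition autk :: "nat \<Rightarrow> (bool list \<Rightarrow> bool) \<Rightarrow> bool list \<Rightarrow> bool list" where
  "autk k P v = (if length v \<le> k then pf P v else v)"

lemma pf_len[simp]: "length (pf P v) = length v"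
  by (induction v arbitrary: P) auto

lemma pf_snoc: "pf P (v @ [b]) = pf P v @ [b \<noteq> P v]"
  by (induction v arbitrary: P) auto

lemma pf_inj: "pf P v = pf P w \<Longrightarrow> v = w"
proof (induction v arbitrary: P w)
  case Nil then show ?case by (cases w) auto
next
  case (Cons x xs)
  show ?case
  proof (cases w)
    case Nil then show ?thesis using Cons by simp
  next
    case (Cons a list)
    with Cons.prems have h: "(x \<noteq> P []) = (a \<noteq> P [])" "pf (\<lambda>ys. P (x # ys)) xs = pf (\<lambda>ys. P (a # ys)) list" by auto
    from h(1) have "x = a" by blast
    with h(2) Cons.IH Cons show ?thesis by auto
  qed
qed

lemma autk_len: "length (autk k P v) = length v"
  by (simp add: autk_def)

lemma autk_inj: "inj (autk k P)"
proof (rule injI)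
  fix v w assume "autk k P v = autk k P w"
  then show "v = w" using pf_inj[of P v w] autk_len[of k P v] autk_len[of k P w]
    by (auto simp: autk_def split: if_splits)
qed

lemma autk_ta: "tree_aut k (autk k P)"
  unfolding tree_aut_def
proof (intro conjI allI impI)
  have img: "autk k P ` tree_verts k \<subseteq> tree_verts k"
    by (auto simp: tree_verts_def autk_len)
  have "inj_on (autk k P) (tree_verts k)" using autk_inj inj_on_subset by blast
  moreover then have "autk k P ` tree_verts k = tree_verts k"
    using endo_inj_surj[OF fin_tv img] by blast
  ultimately have "bij_betw (autk k P) (tree_verts k) (tree_verts k)" by (simp add: bij_betw_def)
  then show "autk k P permutes tree_verts k"
    by (rule bij_imp_permutes) (simp add: autk_def tree_verts_def)
  fix v :: "bool list" and b :: bool assume "length v < k"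
  then show "\<exists>c. autk k P (v @ [b]) = autk k P v @ [c]"
    by (simp add: autk_def pf_snoc)
qed

lemma autk_snoc: "length v < k \<Longrightarrow> autk k P (v @ [b]) = autk k P v @ [b \<noteq> P v]"
  by (simp add: autk_def pf_snoc)

lemma active_autk: "length v < k \<Longrightarrow> active (autk k P) v = P v"
  by (simp add: active_def autk_snoc)

lemma ta_ext: assumes "tree_aut k f" "tree_aut k g" "\<And>v. length v < k \<Longrightarrow> active f v = active g v"
  shows "f = g"
proof
  fix v
  show "f v = g v"
  proof (cases "length v \<le> k")
    case True
    then show ?thesis
    proof (induction v rule: rev_induct)
      case Nil then show ?case using ta_root assms by metis
    next
      case (snoc x xs)
      then have l: "length xs < k" by simp
      show ?case using ta_snoc[OF assms(1) l] ta_snoc[OF assms(2) l] snoc assms(3)[OF l] by simp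
    qed
  next
    case False
    then show ?thesis using ta_out assms by metis
  qed
qed

lemma ta_eq_autk: "tree_aut k g \<Longrightarrow> g = autk k (active g)"
  by (rule ta_ext[OF _ autk_ta]) (simp_all add: active_autk)

lemma autk_cong: "(\<And>v. length v < k \<Longrightarrow> P v = Q v) \<Longrightarrow> autk k P = autk k Q"
  by (rule ta_ext[OF autk_ta autk_ta]) (simp add: active_autk)

lemma ta_fix_low: assumes "tree_aut k g" "\<And>v. length v < l \<Longrightarrow> \<not> active g v" "l \<le> k" "length v \<le> l"
  shows "g v = v"
  using assms(4)
proof (induction v rule: rev_induct)
  case Nil then show ?case using ta_root assms by metis
next
  case (snoc x xs)
  then have l: "length xs < k" "length xs < l" using assms(3) by auto
  show ?case using ta_snoc[OF assms(1) l(1)] snoc assms(2)[OF l(2)] by simp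
qed

lemma autk_path: assumes "length v \<le> k" "\<And>j. j < length v \<Longrightarrow> P (take j v) = (v ! j \<noteq> w ! j)"
  "length w = length v"
  shows "autk k P v = w"
proof -
  have "j \<le> length v \<Longrightarrow> autk k P (take j v) = take j w" for j
  proof (induction j)
    case 0 then show ?case by (simp add: autk_def)
  next
    case (Suc j)
    then have jl: "j < length v" by simp
    have tv: "take (Suc j) v = take j v @ [v ! j]" by (simp add: jl take_Suc_conv_app_nth)
    have tw: "take (Suc j) w = take j w @ [w ! j]" using assms(3) by (simp add: jl take_Suc_conv_app_nth)
    have "length (take j v) < k" using jl assms(1) by simp
    then show ?case using autk_snoc[of "take j v" k P "v ! j"] Suc assms(2)[OF jl] tv tw by auto
  qed
  from this[of "length v"] show ?thesis using assms(3) by simp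
qed



lemma leaf_perm: assumes "tree_aut k g" "l \<le> k"
  shows "leaf_action l g permutes {v. length v = l}"
proof -
  have img: "leaf_action l g ` {v. length v = l} \<subseteq> {v. length v = l}"
    by (auto simp: leaf_action_def ta_len[OF assms(1)])
  have "inj (leaf_action l g)"
  proof (rule injI)
    fix x y assume "leaf_action l g x = leaf_action l g y"
    then show "x = y" using ta_inj[OF assms(1)] ta_len[OF assms(1), of x] ta_len[OF assms(1), of y]
      by (auto simp: leaf_action_def inj_eq split: if_splits)
  qed
  then have inj: "inj_on (leaf_action l g) {v. length v = l}" using inj_on_subset by blast
  have "leaf_action l g ` {v. length v = l} = {v. length v = l}"
    using endo_inj_surj[OF fin_lev img inj] .
  then have "bij_betw (leaf_action l g) {v. length v = l} {v. length v = l}"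
    using inj by (simp add: bij_betw_def)
  then show ?thesis
    by (rule bij_imp_permutes) (simp add: leaf_action_def)
qed

lemma leaf_permutation: "tree_aut k g \<Longrightarrow> permutation (leaf_action k g)"
  using leaf_perm[of k g k] fin_lev permutes_imp_permutation by blast

lemma leaf_comp: assumes "tree_aut k g"
  shows "leaf_action l (f \<circ> g) = leaf_action l f \<circ> leaf_action l g"
  by (auto simp: leaf_action_def ta_len[OF assms] fun_eq_iff)

lemma leaf_id: "leaf_action l id = id"
  by (auto simp: leaf_action_def fun_eq_iff)

definition dbl :: "(bool list \<Rightarrow> bool list) \<Rightarrow> bool list \<Rightarrow> bool list" where
  "dbl s w = (if w = [] then [] else s (butlast w) @ [last w])"

lemma dbl_id: "dbl id = id"
  by (auto simp: dbl_def fun_eq_iff)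

lemma dbl_comp: "dbl (f \<circ> g) = dbl f \<circ> dbl g"
  by (auto simp: dbl_def fun_eq_iff)

lemma dbl_transp: assumes "a \<noteq> b"
  shows "dbl (transpose a b) = transpose (a @ [False]) (b @ [False]) \<circ> transpose (a @ [True]) (b @ [True])"
proof
  fix w :: "bool list"
  show "dbl (transpose a b) w = (transpose (a @ [False]) (b @ [False]) \<circ> transpose (a @ [True]) (b @ [True])) w"
  proof (cases w rule: rev_cases)
    case Nil then show ?thesis by (simp add: dbl_def transpose_def)
  next
    case (snoc v c)
    then show ?thesis using assms by (cases c) (auto simp: dbl_def transpose_def)
  qed
qed

lemma dbl_even: assumes "s permutes S" "finite S"
  shows "permutation (dbl s) \<and> evenperm (dbl s)"
  using assms
proof (induction rule: permutes_induct)
  case id then show ?case by (simp only: dbl_id permutation_id evenperm_id)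
next
  case (swap a b p)
  let ?t1 = "transpose (a @ [False]) (b @ [False])" and ?t2 = "transpose (a @ [True]) (b @ [True])"
  have e: "dbl (transpose a b \<circ> p) = (?t1 \<circ> ?t2) \<circ> dbl p"
    by (simp add: dbl_comp dbl_transp[OF swap(3)])
  have p12: "permutation (?t1 \<circ> ?t2)" by (simp add: permutation_compose permutation_swap_id)
  have e12: "evenperm (?t1 \<circ> ?t2)"
    using swap(3) by (simp add: evenperm_comp permutation_swap_id evenperm_swap)
  have IH: "permutation (dbl p)" "evenperm (dbl p)" using swap by blast+
  have "permutation ((?t1 \<circ> ?t2) \<circ> dbl p)" by (rule permutation_compose[OF p12 IH(1)])
  moreover have "evenperm ((?t1 \<circ> ?t2) \<circ> dbl p)" using evenperm_comp[OF p12 IH(1)] e12 IH(2) by blast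
  ultimately show ?case unfolding e by blast
qed

definition tS :: "nat \<Rightarrow> bool list set \<Rightarrow> bool list \<Rightarrow> bool list" where
  "tS k S = autk k (\<lambda>v. v \<in> S)"

lemma tS_ta: "tree_aut k (tS k S)" by (simp add: tS_def autk_ta)

lemma active_tS: "length v < k \<Longrightarrow> active (tS k S) v = (v \<in> S)"
  by (simp add: tS_def active_autk)

lemma tS_fix: assumes "S \<subseteq> {v. length v = l}" "l < k" "length v \<le> l"
  shows "tS k S v = v"
proof (rule ta_fix_low[where l=l])
  show "tree_aut k (tS k S)" by (rule tS_ta)
  fix u :: "bool list" assume "length u < l"
  then show "\<not> active (tS k S) u" using assms by (auto simp: active_tS)
qed (use assms in auto)

lemma tS_insert: assumes "insert x S \<subseteq> {v. length v = l}" "l < k" "x \<notin> S"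
  shows "tS k (insert x S) = tS k S \<circ> tS k {x}"
proof (rule ta_ext[OF tS_ta ta_comp[OF tS_ta tS_ta]])
  fix v :: "bool list" assume lv: "length v < k"
  show "active (tS k (insert x S)) v = active (tS k S \<circ> tS k {x}) v"
  proof (cases "length v \<le> l")
    case True
    then have "tS k {x} v = v" using tS_fix[of "{x}" l k v] assms by auto
    then show ?thesis using active_comp[OF tS_ta tS_ta lv] lv assms(3) by (auto simp: active_tS)
  next
    case False
    have l2: "length (tS k {x} v) < k" using lv ta_len[OF tS_ta] by simp
    have "length (tS k {x} v) = length v" using ta_len[OF tS_ta] by simp
    then show ?thesis using active_comp[OF tS_ta tS_ta lv] lv False assms(1) active_tS[OF l2]
      by (auto simp: active_tS)
  qed
qed

lemma leaf_tS1: assumes "length x = k - 1" "k \<ge> 1"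
  shows "leaf_action k (tS k {x}) = transpose (x @ [False]) (x @ [True])"
proof
  fix w :: "bool list"
  show "leaf_action k (tS k {x}) w = transpose (x @ [False]) (x @ [True]) w"
  proof (cases "length w = k")
    case False
    then have "w \<noteq> x @ [False]" "w \<noteq> x @ [True]" using assms by auto
    then show ?thesis using False by (simp add: leaf_action_def transpose_def)
  next
    case True
    then obtain v c where w: "w = v @ [c]" using assms by (cases w rule: rev_cases) auto
    then have lv: "length v = k - 1" "length v < k" using True assms by auto
    have "tS k {x} w = v @ [c \<noteq> (v = x)]"
      using w ta_snoc[OF tS_ta lv(2)] active_tS[OF lv(2)] tS_fix[of "{x}" "k-1" k v] lv assms by auto
    then show ?thesis using True w by (cases c; auto simp: leaf_action_def transpose_def)
  qed
qed

lemma tS_even: assumes "finite S" "S \<subseteq> {v. length v = k - 1}" "k \<ge> 1"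
  shows "permutation (leaf_action k (tS k S)) \<and> (evenperm (leaf_action k (tS k S)) \<longleftrightarrow> even (card S))"
  using assms
proof (induction S rule: finite_induct)
  case empty
  have "tS k {} = id" by (rule ta_ext[OF tS_ta ta_id]) (simp add: active_tS active_id)
  then show ?case by (metis card.empty even_zero evenperm_id permutation_id leaf_id)
next
  case (insert x F)
  have kk: "k - 1 < k" using insert by simp
  have e: "leaf_action k (tS k (insert x F)) = leaf_action k (tS k F) \<circ> transpose (x @ [False]) (x @ [True])"
    using tS_insert[OF insert(4) kk insert(2)] leaf_comp[OF tS_ta] leaf_tS1[of x k] insert by auto
  have IH: "permutation (leaf_action k (tS k F))" "evenperm (leaf_action k (tS k F)) \<longleftrightarrow> even (card F)"
    using insert by auto
  let ?t = "transpose (x @ [False]) (x @ [True])"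
  have pc: "permutation (leaf_action k (tS k F) \<circ> ?t)"
    by (rule permutation_compose[OF IH(1) permutation_swap_id])
  have "evenperm (leaf_action k (tS k F) \<circ> ?t) \<longleftrightarrow> (evenperm (leaf_action k (tS k F)) = evenperm ?t)"
    by (rule evenperm_comp[OF IH(1) permutation_swap_id])
  also have "\<dots> \<longleftrightarrow> even (card (insert x F))" using IH(2) insert(1,2) evenperm_swap[of "x @ [False]" "x @ [True]"] by simp
  finally show ?case unfolding e using pc by blast
qed

lemma sign_lemma: assumes "tree_aut k g" "k \<ge> 1"
  shows "evenperm (leaf_action k g) \<longleftrightarrow> even (level_index g (k - 1))"
proof -
  define S where "S = {v. length v = k - 1 \<and> active g v}"
  define g0 where "g0 = autk k (\<lambda>v. active g v \<and> length v \<noteq> k - 1)"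
  have Ssub: "S \<subseteq> {v. length v = k - 1}" by (auto simp: S_def)
  have finS: "finite S" using Ssub fin_lev finite_subset by blast
  have g0ta: "tree_aut k g0" by (simp add: g0_def autk_ta)
  have gdec: "g = g0 \<circ> tS k S"
  proof (rule ta_ext[OF assms(1) ta_comp[OF g0ta tS_ta]])
    fix v :: "bool list" assume lv: "length v < k"
    have "tS k S v = v" using tS_fix[OF Ssub, of k v] lv by simp
    then show "active g v = active (g0 \<circ> tS k S) v"
      using active_comp[OF g0ta tS_ta lv] active_tS[OF lv] lv by (auto simp: g0_def active_autk S_def)
  qed
  have g0leaf: "leaf_action k g0 = dbl (leaf_action (k - 1) g0)"
  proof
    fix w :: "bool list"
    show "leaf_action k g0 w = dbl (leaf_action (k - 1) g0) w"
    proof (cases w rule: rev_cases)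
      case Nil then show ?thesis using assms(2) by (simp add: leaf_action_def dbl_def)
    next
      case (snoc v c)
      show ?thesis
      proof (cases "length w = k")
        case True
        then have lv: "length v < k" "length v = k - 1" using snoc by auto
        have "g0 w = g0 v @ [c]" using snoc ta_snoc[OF g0ta lv(1)] lv by (simp add: g0_def active_autk)
        then show ?thesis using True snoc lv by (simp add: leaf_action_def dbl_def)
      next
        case False
        then have "length v \<noteq> k - 1" using snoc assms(2) by auto
        then show ?thesis using False snoc by (simp add: leaf_action_def dbl_def)
      qed
    qed
  qed
  have d: "permutation (leaf_action k g0) \<and> evenperm (leaf_action k g0)"
    unfolding g0leaf by (rule dbl_even[OF leaf_perm[OF g0ta, of "k - 1"] fin_lev]) simp
  have t: "permutation (leaf_action k (tS k S)) \<and> (evenperm (leaf_action k (tS k S)) \<longleftrightarrow> even (card S))"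
    by (rule tS_even[OF finS Ssub assms(2)])
  have "leaf_action k g = leaf_action k g0 \<circ> leaf_action k (tS k S)"
    using gdec leaf_comp[OF tS_ta] by metis
  then have "evenperm (leaf_action k g) \<longleftrightarrow> even (card S)" using d t by (simp add: evenperm_comp)
  then show ?thesis by (simp add: S_def level_index_def)
qed

lemma G_carrier: "g \<in> carrier (G_grp k) \<longleftrightarrow> tree_aut k g \<and> evenperm (leaf_action k g)"
  by (simp add: G_grp_def)

lemma G_mult: "x \<otimes>\<^bsub>G_grp k\<^esub> y = x \<circ> y" by (simp add: G_grp_def)
lemma G_one: "\<one>\<^bsub>G_grp k\<^esub> = id" by (simp add: G_grp_def)

lemma G_group: "group (G_grp k)"
proof (rule groupI)
  fix x y assume "x \<in> carrier (G_grp k)" "y \<in> carrier (G_grp k)"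
  then have a: "tree_aut k x" "tree_aut k y" "evenperm (leaf_action k x)" "evenperm (leaf_action k y)"
    by (auto simp: G_carrier)
  have "leaf_action k (x \<circ> y) = leaf_action k x \<circ> leaf_action k y" by (rule leaf_comp[OF a(2)])
  then have "evenperm (leaf_action k (x \<circ> y))"
    using evenperm_comp[OF leaf_permutation[OF a(1)] leaf_permutation[OF a(2)]] a(3,4) by simp
  then show "x \<otimes>\<^bsub>G_grp k\<^esub> y \<in> carrier (G_grp k)"
    using ta_comp[OF a(1,2)] by (simp add: G_carrier G_mult)
next
  show "\<one>\<^bsub>G_grp k\<^esub> \<in> carrier (G_grp k)" by (simp add: G_carrier G_one ta_id leaf_id)
next
  fix x y z show "x \<otimes>\<^bsub>G_grp k\<^esub> y \<otimes>\<^bsub>G_grp k\<^esub> z = x \<otimes>\<^bsub>G_grp k\<^esub> (y \<otimes>\<^bsub>G_grp k\<^esub> z)"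
    by (simp add: G_mult o_assoc)
next
  fix x show "\<one>\<^bsub>G_grp k\<^esub> \<otimes>\<^bsub>G_grp k\<^esub> x = x" by (simp add: G_mult G_one)
next
  fix x assume x: "x \<in> carrier (G_grp k)"
  then have ta: "tree_aut k x" and ev: "evenperm (leaf_action k x)" by (auto simp: G_carrier)
  let ?y = "inv_into UNIV x"
  have yta: "tree_aut k ?y" by (rule ta_inv[OF ta])
  have yx: "?y \<circ> x = id" using permutes_inv_o(2)[OF ta_perm[OF ta]] .
  have "leaf_action k ?y \<circ> leaf_action k x = id" using leaf_comp[OF ta, of k ?y] yx leaf_id by metis
  then have "evenperm (leaf_action k ?y)" using ev
    by (metis evenperm_comp evenperm_id leaf_permutation ta yta)
  then show "\<exists>y\<in>carrier (G_grp k). y \<otimes>\<^bsub>G_grp k\<^esub> x = \<one>\<^bsub>G_grp k\<^esub>"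
    using yta yx by (auto simp: G_carrier G_mult G_one)
qed



lemma even_symdiff: assumes "finite X" "finite Y"
  shows "even (card ((X - Y) \<union> (Y - X))) \<longleftrightarrow> (even (card X) \<longleftrightarrow> even (card Y))"
proof -
  have d: "card ((X - Y) \<union> (Y - X)) = card (X - Y) + card (Y - X)"
    by (rule card_Un_disjoint) (use assms in auto)
  have x: "card X = card (X - Y) + card (X \<inter> Y)"
    using assms card_Diff_subset_Int[of X Y] card_Int_Diff[of X Y] by (metis add.commute card_Int_Diff)
  have y: "card Y = card (Y - X) + card (X \<inter> Y)"
    using assms card_Int_Diff[of Y X] by (metis Int_commute add.commute)
  show ?thesis using d x y by presburger
qed

lemma cnt_comp: assumes "tree_aut k f" "tree_aut k g" "A \<subseteq> {v. length v < k}" "finite A"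
  shows "even (card {v\<in>A. active (f \<circ> g) v}) \<longleftrightarrow>
    (even (card {v\<in>A. active g v}) \<longleftrightarrow> even (card {v\<in>g ` A. active f v}))"
proof -
  let ?X = "{v\<in>A. active g v}" and ?Y = "{v\<in>A. active f (g v)}"
  have e: "{v\<in>A. active (f \<circ> g) v} = (?X - ?Y) \<union> (?Y - ?X)"
    using active_comp[OF assms(1,2)] assms(3) by auto
  have "{v\<in>g ` A. active f v} = g ` ?Y" by auto
  moreover have "inj_on g ?Y" using ta_inj[OF assms(2)] inj_on_subset by blast
  ultimately have c: "card {v\<in>g ` A. active f v} = card ?Y" by (simp add: card_image)
  show ?thesis unfolding e c by (rule even_symdiff) (use assms(4) in auto)
qed

lemma lev_img: assumes "tree_aut k g" "l \<le> k" shows "g ` {v. length v = l} = {v. length v = l}"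
proof -
  have "leaf_action l g ` {v. length v = l} = {v. length v = l}"
    by (rule permutes_image[OF leaf_perm[OF assms]])
  moreover have "leaf_action l g ` {v. length v = l} = g ` {v. length v = l}"
    by (auto simp: leaf_action_def)
  ultimately show ?thesis by simp
qed

lemma lev_comp: assumes "tree_aut k f" "tree_aut k g" "l < k"
  shows "even (level_index (f \<circ> g) l) \<longleftrightarrow> (even (level_index g l) \<longleftrightarrow> even (level_index f l))"
proof -
  have A: "{v. length v = l} \<subseteq> {v. length v < k}" using assms(3) by auto
  have "\<And>h. {v. length v = l \<and> active h v} = {v\<in>{v. length v = l}. active h v}" by auto
  then show ?thesis using cnt_comp[OF assms(1,2) A fin_lev] lev_img[OF assms(2), of l] assms(3)
    unfolding level_index_def by simp
qed

lemma first_el: assumes "tree_aut k g" "v \<noteq> []" "length v \<le> k"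
  shows "take 1 (g v) = [hd v \<noteq> active g []]"
proof -
  have "g v = autk k (active g) v" using ta_eq_autk[OF assms(1)] by metis
  moreover obtain x xs where "v = x # xs" using assms(2) by (cases v) auto
  ultimately show ?thesis using assms(3) by (simp add: autk_def)
qed

lemma half_img: assumes "tree_aut k g" "k \<ge> 2"
  shows "g ` {v. length v = k - 1 \<and> take 1 v = [b]} = {v. length v = k - 1 \<and> take 1 v = [b \<noteq> active g []]}"
proof
  show "g ` {v. length v = k - 1 \<and> take 1 v = [b]} \<subseteq> {v. length v = k - 1 \<and> take 1 v = [b \<noteq> active g []]}"
  proof
    fix w assume "w \<in> g ` {v. length v = k - 1 \<and> take 1 v = [b]}"
    then obtain v where v: "w = g v" "length v = k - 1" "take 1 v = [b]" by auto
    then have "v \<noteq> []" by auto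
    then have "hd v = b" using v(3) by (cases v) auto
    then show "w \<in> {v. length v = k - 1 \<and> take 1 v = [b \<noteq> active g []]}"
      using first_el[OF assms(1) \<open>v \<noteq> []\<close>] v ta_len[OF assms(1)] by auto
  qed
next
  show "{v. length v = k - 1 \<and> take 1 v = [b \<noteq> active g []]} \<subseteq> g ` {v. length v = k - 1 \<and> take 1 v = [b]}"
  proof
    fix w assume w: "w \<in> {v. length v = k - 1 \<and> take 1 v = [b \<noteq> active g []]}"
    define u where "u = inv_into UNIV g w"
    have gu: "g u = w" unfolding u_def by (rule permutes_inverses(1)[OF ta_perm[OF assms(1)]])
    have lu: "length u = k - 1" using w gu ta_len[OF assms(1), of u] by auto
    then have "u \<noteq> []" using assms(2) by auto
    then have "take 1 w = [hd u \<noteq> active g []]" using first_el[OF assms(1), of u] gu lu by auto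
    then have "hd u = b" using w by auto
    then have "take 1 u = [b]" using \<open>u \<noteq> []\<close> by (cases u) auto
    then show "w \<in> g ` {v. length v = k - 1 \<and> take 1 v = [b]}" using gu lu by blast
  qed
qed

definition half :: "nat \<Rightarrow> bool \<Rightarrow> (bool list \<Rightarrow> bool list) \<Rightarrow> nat" where
  "half k b g = card {v. length v = k - 1 \<and> take 1 v = [b] \<and> active g v}"

lemma fin_half: "finite {v. length v = k - 1 \<and> take 1 v = [b] \<and> active g v}"
  by (rule finite_subset[OF _ fin_lev[of "k - 1"]]) auto

lemma half_sum: assumes "k \<ge> 2"
  shows "level_index g (k - 1) = half k False g + half k True g"
proof -
  have "{v. length v = k - 1 \<and> active g v} =
     {v. length v = k - 1 \<and> take 1 v = [False] \<and> active g v} \<union> {v. length v = k - 1 \<and> take 1 v = [True] \<and> active g v}"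
  proof -
    have "\<And>v::bool list. length v = k - 1 \<Longrightarrow> take 1 v = [False] \<or> take 1 v = [True]"
    proof -
      fix v :: "bool list" assume "length v = k - 1"
      then have "v \<noteq> []" using assms by auto
      then show "take 1 v = [False] \<or> take 1 v = [True]" by (cases v) auto
    qed
    then show ?thesis by blast
  qed
  moreover have "card ({v. length v = k - 1 \<and> take 1 v = [False] \<and> active g v} \<union> {v. length v = k - 1 \<and> take 1 v = [True] \<and> active g v})
    = card {v. length v = k - 1 \<and> take 1 v = [False] \<and> active g v} + card {v. length v = k - 1 \<and> take 1 v = [True] \<and> active g v}"
    by (rule card_Un_disjoint[OF fin_half fin_half]) auto
  ultimately show ?thesis unfolding level_index_def half_def by simp
qed

lemma half_comp: assumes "k \<ge> 2" "f \<in> carrier (G_grp k)" "g \<in> carrier (G_grp k)"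
  shows "even (half k b (f \<circ> g)) \<longleftrightarrow> (even (half k b g) \<longleftrightarrow> even (half k b f))"
proof -
  have ta: "tree_aut k f" "tree_aut k g" and ev: "evenperm (leaf_action k f)" using assms by (auto simp: G_carrier)
  let ?A = "{v. length v = k - 1 \<and> take 1 v = [b]}"
  have A: "?A \<subseteq> {v. length v < k}" using assms(1) by auto
  have finA: "finite ?A" by (rule finite_subset[OF _ fin_lev[of "k - 1"]]) auto
  have "\<And>h c. {v\<in>{v. length v = k - 1 \<and> take 1 v = [c]}. active h v} = {v. length v = k - 1 \<and> take 1 v = [c] \<and> active h v}" by auto
  then have "even (half k b (f \<circ> g)) \<longleftrightarrow> (even (half k b g) \<longleftrightarrow> even (half k (b \<noteq> active g []) f))"
    using cnt_comp[OF ta A finA] half_img[OF ta(2) assms(1), of b] unfolding half_def by simp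
  moreover have "even (level_index f (k - 1))" using sign_lemma[OF ta(1)] ev assms(1) by simp
  then have "even (half k False f) \<longleftrightarrow> even (half k True f)" using half_sum[OF assms(1), of f] by simp
  then have "even (half k (b \<noteq> active g []) f) \<longleftrightarrow> even (half k b f)" by (cases b; cases "active g []") auto
  ultimately show ?thesis by simp
qed

definition parhom :: "nat \<Rightarrow> ((bool list \<Rightarrow> bool list) \<Rightarrow> nat) \<Rightarrow> bool" where
  "parhom k p \<longleftrightarrow> even (p id) \<and> (\<forall>f\<in>carrier (G_grp k). \<forall>g\<in>carrier (G_grp k).
      even (p (f \<circ> g)) \<longleftrightarrow> (even (p g) \<longleftrightarrow> even (p f)))"

lemma parhom_inv: assumes "parhom k p" "h \<in> carrier (G_grp k)"
  shows "even (p (inv\<^bsub>G_grp k\<^esub> h)) \<longleftrightarrow> even (p h)"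
proof -
  interpret G: group "G_grp k" by (rule G_group)
  have i: "inv\<^bsub>G_grp k\<^esub> h \<in> carrier (G_grp k)" using assms(2) by simp
  have "h \<circ> inv\<^bsub>G_grp k\<^esub> h = id" using G.r_inv[OF assms(2)] by (simp add: G_mult G_one)
  then show ?thesis using assms i unfolding parhom_def by metis
qed

lemma parhom_comm: assumes "parhom k p" "h \<in> derived_set (G_grp k) (carrier (G_grp k))"
  shows "even (p h)"
proof -
  interpret G: group "G_grp k" by (rule G_group)
  from assms(2) obtain a b where ab: "a \<in> carrier (G_grp k)" "b \<in> carrier (G_grp k)"
    "h = a \<otimes>\<^bsub>G_grp k\<^esub> b \<otimes>\<^bsub>G_grp k\<^esub> inv\<^bsub>G_grp k\<^esub> a \<otimes>\<^bsub>G_grp k\<^esub> inv\<^bsub>G_grp k\<^esub> b" by blast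
  let ?ia = "inv\<^bsub>G_grp k\<^esub> a" and ?ib = "inv\<^bsub>G_grp k\<^esub> b"
  have c: "?ia \<in> carrier (G_grp k)" "?ib \<in> carrier (G_grp k)" using ab by auto
  have h: "h = ((a \<circ> b) \<circ> ?ia) \<circ> ?ib" using ab(3) by (simp add: G_mult)
  have c2: "a \<circ> b \<in> carrier (G_grp k)" "(a \<circ> b) \<circ> ?ia \<in> carrier (G_grp k)"
    using G.m_closed[OF ab(1,2)] G.m_closed[OF G.m_closed[OF ab(1,2)] c(1)] by (simp_all add: G_mult)
  have P: "\<And>f g. f \<in> carrier (G_grp k) \<Longrightarrow> g \<in> carrier (G_grp k) \<Longrightarrow> even (p (f \<circ> g)) \<longleftrightarrow> (even (p g) \<longleftrightarrow> even (p f))"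
    using assms(1) unfolding parhom_def by blast
  show ?thesis unfolding h using P[OF c2(2) c(2)] P[OF c2(1) c(1)] P[OF ab(1,2)]
      parhom_inv[OF assms(1) ab(1)] parhom_inv[OF assms(1) ab(2)] by blast
qed

lemma parhom_derived: assumes "parhom k p" "x \<in> derived (G_grp k) (carrier (G_grp k))"
  shows "even (p x) \<and> x \<in> carrier (G_grp k)"
proof -
  interpret G: group "G_grp k" by (rule G_group)
  have sub: "derived_set (G_grp k) (carrier (G_grp k)) \<subseteq> carrier (G_grp k)" by blast
  from assms(2) have "x \<in> generate (G_grp k) (derived_set (G_grp k) (carrier (G_grp k)))"
    by (simp add: derived_def)
  then show ?thesis
  proof (induction rule: generate.induct)
    case one
    have "even (p id)" using assms(1) unfolding parhom_def by blast
    moreover have "id \<in> carrier (G_grp k)" using G.one_closed unfolding G_one .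
    ultimately show ?case unfolding G_one by blast
  next
    case (incl h) then show ?case using parhom_comm[OF assms(1)] sub by blast
  next
    case (inv h)
    then have "h \<in> carrier (G_grp k)" "even (p h)" using parhom_comm[OF assms(1)] sub by blast+
    then show ?case using parhom_inv[OF assms(1)] G.inv_closed by blast
  next
    case (eng h1 h2)
    then have c: "h1 \<in> carrier (G_grp k)" "h2 \<in> carrier (G_grp k)" "even (p h1)" "even (p h2)" by blast+
    have P: "even (p (h1 \<circ> h2)) \<longleftrightarrow> (even (p h2) \<longleftrightarrow> even (p h1))"
      using assms(1) c(1,2) unfolding parhom_def by blast
    have "h1 \<circ> h2 \<in> carrier (G_grp k)" using G.m_closed[OF c(1,2)] by (simp add: G_mult)
    then show ?case using P c(3,4) unfolding G_mult by blast
  qed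
qed

lemma parhom_lev: assumes "l < k" shows "parhom k (\<lambda>g. level_index g l)"
  unfolding parhom_def
proof (intro conjI ballI)
  show "even (level_index id l)" by (simp add: level_index_def active_id)
  fix f g assume "f \<in> carrier (G_grp k)" "g \<in> carrier (G_grp k)"
  then have "tree_aut k f" "tree_aut k g" by (auto simp: G_carrier)
  then show "even (level_index (f \<circ> g) l) \<longleftrightarrow> (even (level_index g l) \<longleftrightarrow> even (level_index f l))"
    using lev_comp assms by blast
qed

lemma parhom_half: "k \<ge> 2 \<Longrightarrow> parhom k (half k b)"
  unfolding parhom_def using half_comp by (auto simp: half_def active_id)



definition W :: "nat \<Rightarrow> nat \<Rightarrow> (bool list \<Rightarrow> bool list) \<Rightarrow> bool list set \<Rightarrow> bool" where
  "W k l c S \<longleftrightarrow> c \<in> derived (G_grp k) (carrier (G_grp k)) \<and> (\<forall>v. length v < l \<longrightarrow> \<not> active c v)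
     \<and> (\<forall>v. length v = l \<longrightarrow> active c v = (v \<in> S))"

lemma derived_carrier: "c \<in> derived (G_grp k) (carrier (G_grp k)) \<Longrightarrow> c \<in> carrier (G_grp k)"
proof -
  interpret G: group "G_grp k" by (rule G_group)
  assume "c \<in> derived (G_grp k) (carrier (G_grp k))"
  then show ?thesis unfolding derived_def by (rule G.generate_in_carrier[rotated]) blast
qed

lemma derived_mult: "a \<in> derived (G_grp k) (carrier (G_grp k)) \<Longrightarrow> b \<in> derived (G_grp k) (carrier (G_grp k))
   \<Longrightarrow> a \<circ> b \<in> derived (G_grp k) (carrier (G_grp k))"
  unfolding derived_def using generate.eng[of a "G_grp k" _ b] by (simp add: G_mult)

lemma derived_inv: "a \<in> derived (G_grp k) (carrier (G_grp k)) \<Longrightarrow> inv\<^bsub>G_grp k\<^esub> a \<in> derived (G_grp k) (carrier (G_grp k))"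
proof -
  interpret G: group "G_grp k" by (rule G_group)
  assume "a \<in> derived (G_grp k) (carrier (G_grp k))"
  then show ?thesis unfolding derived_def by (rule G.generate_m_inv_closed[rotated]) blast
qed

lemma derived_id: "id \<in> derived (G_grp k) (carrier (G_grp k))"
  unfolding derived_def using generate.one[of "G_grp k"] by (simp add: G_one)

lemma W_id: "W k l id {}"
  by (simp add: W_def derived_id active_id)

lemma W_mult: assumes "l < k" "W k l c1 S1" "W k l c2 S2"
  shows "W k l (c1 \<circ> c2) ((S1 - S2) \<union> (S2 - S1))"
proof -
  have d: "c1 \<in> derived (G_grp k) (carrier (G_grp k))" "c2 \<in> derived (G_grp k) (carrier (G_grp k))"
    using assms by (auto simp: W_def)
  have ta: "tree_aut k c1" "tree_aut k c2" using derived_carrier[OF d(1)] derived_carrier[OF d(2)]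
    by (auto simp: G_carrier)
  have fix2: "c2 v = v" if "length v \<le> l" for v
    by (rule ta_fix_low[OF ta(2) _ _ that]) (use assms in \<open>auto simp: W_def\<close>)
  have act: "active (c1 \<circ> c2) v = (active c2 v \<noteq> active c1 v)" if "length v \<le> l" for v
    using active_comp[OF ta, of v] fix2[OF that] that assms(1) by simp
  show ?thesis unfolding W_def
  proof (intro conjI allI impI)
    show "c1 \<circ> c2 \<in> derived (G_grp k) (carrier (G_grp k))" by (rule derived_mult[OF d])
  next
    fix v :: "bool list" assume "length v < l"
    then show "\<not> active (c1 \<circ> c2) v" using act[of v] assms(2,3) by (auto simp: W_def)
  next
    fix v :: "bool list" assume "length v = l"
    then show "active (c1 \<circ> c2) v = (v \<in> (S1 - S2) \<union> (S2 - S1))" using act[of v] assms(2,3) by (auto simp: W_def)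
  qed
qed

lemma conj_active: assumes "tree_aut k h" "tree_aut k hi" "tree_aut k a" "h \<circ> hi = id"
  "\<And>x. length x \<le> l \<Longrightarrow> a x = x" "length v \<le> l" "l < k"
  shows "active (h \<circ> a \<circ> hi \<circ> a) v = (active a v \<noteq> active a (hi v))"
proof -
  have lv: "length v < k" using assms(6,7) by simp
  have lhv: "length (hi v) = length v" by (rule ta_len[OF assms(2)])
  have av: "a v = v" using assms(5,6) by simp
  have ahv: "a (hi v) = hi v" using assms(5,6) lhv by simp
  have ha: "tree_aut k (h \<circ> a)" by (rule ta_comp[OF assms(1,3)])
  have hah: "tree_aut k (h \<circ> a \<circ> hi)" by (rule ta_comp[OF ha assms(2)])
  have "active (h \<circ> hi) v = (active hi v \<noteq> active h (hi v))" by (rule active_comp[OF assms(1,2) lv])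
  then have e0: "active hi v = active h (hi v)" using assms(4) active_id by metis
  have e1: "active (h \<circ> a \<circ> hi \<circ> a) v = (active a v \<noteq> active (h \<circ> a \<circ> hi) v)"
    using active_comp[OF hah assms(3) lv] av by simp
  have e2: "active (h \<circ> a \<circ> hi) v = (active hi v \<noteq> active (h \<circ> a) (hi v))"
    by (rule active_comp[OF ha assms(2) lv])
  have e3: "active (h \<circ> a) (hi v) = (active a (hi v) \<noteq> active h (hi v))"
    using active_comp[OF assms(1,3), of "hi v"] lhv lv ahv by simp
  show ?thesis using e0 e1 e2 e3 by blast
qed

lemma W_pair: assumes "k \<ge> 2" "l < k" "u \<noteq> w" "length u = l" "length w = l"
  "l < k - 1 \<or> take 1 u = take 1 w"
  shows "\<exists>c. W k l c {u, w}"
proof -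
  interpret G: group "G_grp k" by (rule G_group)
  define z where "z = (\<not> hd u) # replicate (k - 2) False"
  define Sa where "Sa = (if l < k - 1 then {u} else {u, z})"
  define a where "a = tS k Sa"
  define Ph where "Ph = (\<lambda>x. \<exists>j<l. x = take j u \<and> u ! j \<noteq> w ! j)"
  define h where "h = autk k Ph"
  have lz: "length z = k - 1" using assms(1) by (simp add: z_def)
  have Sasub: "Sa \<subseteq> {v. length v = l}" using lz assms by (auto simp: Sa_def)
  have ata: "tree_aut k a" by (simp add: a_def tS_ta)
  have afix: "\<And>x. length x \<le> l \<Longrightarrow> a x = x" unfolding a_def using tS_fix[OF Sasub assms(2)] by blast
  have zne: "l = k - 1 \<Longrightarrow> u \<noteq> z \<and> w \<noteq> z \<and> take 1 u = take 1 w"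
  proof -
    assume l: "l = k - 1"
    then have "take 1 u = take 1 w" using assms(6) by simp
    moreover have une: "u \<noteq> []" "w \<noteq> []" using l assms(1,4,5) by auto
    ultimately have hh: "hd u = hd w" by (cases u; cases w) auto
    have "u \<noteq> z" using une by (cases u) (auto simp: z_def)
    moreover have "w \<noteq> z" using une hh by (cases w) (auto simp: z_def)
    ultimately show ?thesis using \<open>take 1 u = take 1 w\<close> by blast
  qed
  have acar: "a \<in> carrier (G_grp k)"
  proof -
    have "{v. length v = k - 1 \<and> active a v} = {v. length v = k - 1 \<and> v \<in> Sa}"
      using assms(1) by (auto simp: a_def active_tS)
    moreover have "even (card {v. length v = k - 1 \<and> v \<in> Sa})"
    proof (cases "l < k - 1")
      case True
      then have "{v. length v = k - 1 \<and> v \<in> Sa} = {}" using assms(4) by (auto simp: Sa_def)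
      then show ?thesis by (simp only: card.empty even_zero)
    next
      case False
      then have "l = k - 1" using assms(2) by simp
      then have "{v. length v = k - 1 \<and> v \<in> Sa} = {u, z}" using False assms(4) lz by (auto simp: Sa_def)
      moreover have "card {u, z} = 2" using zne \<open>l = k - 1\<close> by simp
      ultimately show ?thesis by simp
    qed
    ultimately have "evenperm (leaf_action k a)" using sign_lemma[OF ata] assms(1) by (simp add: level_index_def)
    then show ?thesis using ata by (simp add: G_carrier)
  qed
  have aa: "a \<circ> a = id"
  proof (rule ta_ext[OF ta_comp[OF ata ata] ta_id])
    fix v :: "bool list" assume lv: "length v < k"
    show "active (a \<circ> a) v = active id v"
    proof (cases "length v \<le> l")
      case True then show ?thesis using active_comp[OF ata ata lv] afix active_id by simp
    next
      case False
      have "length (a v) = length v" by (rule ta_len[OF ata])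
      then show ?thesis using active_comp[OF ata ata lv] active_id False Sasub lv
        by (auto simp: a_def active_tS)
    qed
  qed
  have ainv: "inv\<^bsub>G_grp k\<^esub> a = a" using G.inv_equality[OF _ acar acar] aa by (simp add: G_mult G_one)
  have hta: "tree_aut k h" by (simp add: h_def autk_ta)
  have hcar: "h \<in> carrier (G_grp k)"
  proof -
    have E: "{v. length v = k - 1 \<and> active h v} = {}"
      using assms(2,4) by (auto simp: h_def active_autk Ph_def)
    have "level_index h (k - 1) = 0" unfolding level_index_def E by simp
    then have "evenperm (leaf_action k h)" using sign_lemma[OF hta] assms(1) by simp
    then show ?thesis using hta by (simp add: G_carrier)
  qed
  have huw: "h u = w" unfolding h_def
  proof (rule autk_path)
    fix j assume j: "j < length u"
    show "Ph (take j u) = (u ! j \<noteq> w ! j)"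
    proof
      assume "Ph (take j u)"
      then obtain j' where "j' < l" "take j u = take j' u" "u ! j' \<noteq> w ! j'" unfolding Ph_def by blast
      moreover then have "length (take j u) = length (take j' u)" by simp
      moreover then have "j = j'" using j assms(4) \<open>j' < l\<close> by simp
      ultimately show "u ! j \<noteq> w ! j" by simp
    next
      assume "u ! j \<noteq> w ! j" then show "Ph (take j u)" unfolding Ph_def using j assms(4) by blast
    qed
  qed (use assms in auto)
  have hzz: "h z = z" if l: "l = k - 1"
    unfolding h_def
  proof (rule autk_path)
    fix j assume j: "j < length z"
    show "Ph (take j z) = (z ! j \<noteq> z ! j)"
    proof (simp, rule notI)
      assume "Ph (take j z)"
      then obtain j' where j': "j' < l" "take j z = take j' u" "u ! j' \<noteq> w ! j'" unfolding Ph_def by blast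
      then have "length (take j z) = length (take j' u)" by simp
      then have jj: "j = j'" using j lz l assms(4) j'(1) by simp
      have une: "u \<noteq> []" "w \<noteq> []" using l assms(1,4,5) by auto
      show False
      proof (cases j)
        case 0
        then have "u ! 0 \<noteq> w ! 0" using j' jj by simp
        moreover have "take 1 u = take 1 w" using zne[OF l] by simp
        ultimately show False using une by (cases u; cases w) auto
      next
        case (Suc i)
        then have "z ! 0 = u ! 0" using j' jj by (metis nth_take zero_less_Suc)
        then show False using une by (cases u) (auto simp: z_def)
      qed
    qed
  qed (use lz assms in auto)
  define hi where "hi = inv\<^bsub>G_grp k\<^esub> h"
  have hicar: "hi \<in> carrier (G_grp k)" using hcar by (simp add: hi_def)
  have hita: "tree_aut k hi" using hicar by (simp add: G_carrier)
  have hhi: "h \<circ> hi = id" using G.r_inv[OF hcar] by (simp add: hi_def G_mult G_one)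
  have hih: "hi \<circ> h = id" using G.l_inv[OF hcar] by (simp add: hi_def G_mult G_one)
  have hhiv: "h (hi x) = x" for x using fun_cong[OF hhi, of x] by simp
  have hihv: "hi (h x) = x" for x using fun_cong[OF hih, of x] by simp
  define c where "c = h \<otimes>\<^bsub>G_grp k\<^esub> a \<otimes>\<^bsub>G_grp k\<^esub> inv\<^bsub>G_grp k\<^esub> h \<otimes>\<^bsub>G_grp k\<^esub> inv\<^bsub>G_grp k\<^esub> a"
  have cder: "c \<in> derived (G_grp k) (carrier (G_grp k))"
    unfolding derived_def c_def by (rule generate.incl) (use hcar acar in blast)
  have cf: "c = h \<circ> a \<circ> hi \<circ> a" unfolding c_def hi_def ainv by (simp add: G_mult)
  have cact: "active c v = (active a v \<noteq> active a (hi v))" if "length v \<le> l" for v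
    unfolding cf by (rule conj_active[OF hta hita ata hhi afix that assms(2)])
  have "W k l c {u, w}" unfolding W_def
  proof (intro conjI allI impI)
    show "c \<in> derived (G_grp k) (carrier (G_grp k))" by (rule cder)
  next
    fix v :: "bool list" assume lv: "length v < l"
    have "length (hi v) = length v" by (rule ta_len[OF hita])
    then show "\<not> active c v" using cact[of v] lv Sasub assms(2) by (auto simp: a_def active_tS)
  next
    fix v :: "bool list" assume lv: "length v = l"
    have lhv: "length (hi v) = l" using ta_len[OF hita] lv by simp
    have e: "active c v = ((v \<in> Sa) \<noteq> (hi v \<in> Sa))" using cact[of v] lv lhv assms(2)
      by (simp add: a_def active_tS)
    have iu: "hi v = u \<longleftrightarrow> v = w" using hhiv hihv huw by metis
    show "active c v = (v \<in> {u, w})"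
    proof (cases "l < k - 1")
      case True
      then show ?thesis using e iu assms(3) by (auto simp: Sa_def)
    next
      case False
      then have l: "l = k - 1" using assms(2) by simp
      have iz: "hi v = z \<longleftrightarrow> v = z" using hhiv hihv hzz[OF l] by metis
      show ?thesis using e iu iz zne[OF l] False assms(3) by (auto simp: Sa_def)
    qed
  qed
  then show ?thesis by blast
qed



lemma pick_pair: assumes "finite X" "even (card X)" "X \<noteq> {}"
  shows "\<exists>u w. u \<in> X \<and> w \<in> X \<and> u \<noteq> w \<and> even (card (X - {u, w})) \<and> card (X - {u, w}) < card X"
proof -
  obtain u where u: "u \<in> X" using assms(3) by blast
  have "card X \<noteq> 0" using assms(1,3) by simp
  then have "card X \<ge> 2" using assms(2) by presburger
  then have "card (X - {u}) \<ge> 1" using u assms(1) by simp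
  then have "X - {u} \<noteq> {}" by (metis card.empty not_one_le_zero)
  then obtain w where w: "w \<in> X - {u}" by blast
  have "card (X - {u, w}) = card X - 2" using u w assms(1)
    by (metis Diff_insert2 card_Diff_singleton Diff_iff diff_diff_left finite_Diff one_add_one)
  then show ?thesis using u w \<open>card X \<ge> 2\<close> assms(2) by (intro exI[of _ u] exI[of _ w]) auto
qed

lemma W_set: assumes "k \<ge> 2" "l < k"
  shows "S \<subseteq> {v. length v = l} \<Longrightarrow> (l < k - 1 \<longrightarrow> even (card S)) \<Longrightarrow>
    (l = k - 1 \<longrightarrow> even (card {v\<in>S. take 1 v = [False]}) \<and> even (card {v\<in>S. take 1 v = [True]})) \<Longrightarrow>
    \<exists>c. W k l c S"
proof (induction "card S" arbitrary: S rule: less_induct)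
  case less
  have finS: "finite S" using less.prems(1) fin_lev finite_subset by blast
  show ?case
  proof (cases "S = {}")
    case True then show ?thesis using W_id by blast
  next
    case False
    have "\<exists>u w. u \<in> S \<and> w \<in> S \<and> u \<noteq> w \<and> (l < k - 1 \<or> take 1 u = take 1 w) \<and> card (S - {u, w}) < card S \<and>
       (l < k - 1 \<longrightarrow> even (card (S - {u, w}))) \<and>
       (l = k - 1 \<longrightarrow> even (card {v\<in>S - {u, w}. take 1 v = [False]}) \<and> even (card {v\<in>S - {u, w}. take 1 v = [True]}))"
    proof (cases "l < k - 1")
      case True
      then obtain u w where uw: "u \<in> S" "w \<in> S" "u \<noteq> w" "even (card (S - {u, w}))" "card (S - {u, w}) < card S"
        using pick_pair[OF finS _ False] less.prems(2) by blast
      then show ?thesis using True by blast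
    next
      case nl: False
      then have l: "l = k - 1" using assms(2) by simp
      have cov: "\<And>v. v \<in> S \<Longrightarrow> take 1 v = [False] \<or> take 1 v = [True]"
      proof -
        fix v assume "v \<in> S"
        then have "v \<noteq> []" using less.prems(1) l assms(1) by auto
        then show "take 1 v = [False] \<or> take 1 v = [True]" by (cases v) auto
      qed
      obtain b where b: "{v\<in>S. take 1 v = [b]} \<noteq> {}" using False cov by blast
      have fb: "finite {v\<in>S. take 1 v = [b]}" using finS by simp
      have eb: "even (card {v\<in>S. take 1 v = [b]})" using less.prems(3) l by (cases b) auto
      obtain u w where uw: "u \<in> {v\<in>S. take 1 v = [b]}" "w \<in> {v\<in>S. take 1 v = [b]}" "u \<noteq> w"
        "even (card ({v\<in>S. take 1 v = [b]} - {u, w}))"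
        using pick_pair[OF fb eb b] by blast
      have sb: "{v\<in>S - {u, w}. take 1 v = [b]} = {v\<in>S. take 1 v = [b]} - {u, w}" by auto
      have snb: "{v\<in>S - {u, w}. take 1 v = [\<not> b]} = {v\<in>S. take 1 v = [\<not> b]}" using uw by auto
      have enb: "even (card {v\<in>S. take 1 v = [\<not> b]})" using less.prems(3) l by (cases b) auto
      have ev: "even (card {v\<in>S - {u, w}. take 1 v = [False]}) \<and> even (card {v\<in>S - {u, w}. take 1 v = [True]})"
        using sb snb uw(4) enb by (cases b) auto
      have "card (S - {u, w}) < card S" using uw finS by (intro psubset_card_mono) auto
      then show ?thesis using uw ev l by (intro exI[of _ u] exI[of _ w]) auto
    qed
    then obtain u w where uw: "u \<in> S" "w \<in> S" "u \<noteq> w" "l < k - 1 \<or> take 1 u = take 1 w"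
      "card (S - {u, w}) < card S" "l < k - 1 \<longrightarrow> even (card (S - {u, w}))"
      "l = k - 1 \<longrightarrow> even (card {v\<in>S - {u, w}. take 1 v = [False]}) \<and> even (card {v\<in>S - {u, w}. take 1 v = [True]})"
      by blast
    obtain c1 where c1: "W k l c1 (S - {u, w})"
      using less.hyps[OF uw(5)] less.prems(1) uw(6,7) by blast
    obtain c2 where c2: "W k l c2 {u, w}"
      using W_pair[OF assms uw(3) _ _ uw(4)] less.prems(1) uw(1,2) by blast
    have "((S - {u, w}) - {u, w}) \<union> ({u, w} - (S - {u, w})) = S" using uw(1,2) by auto
    then show ?thesis using W_mult[OF assms(2) c1 c2] by auto
  qed
qed

definition Qc :: "nat \<Rightarrow> (bool list \<Rightarrow> bool list) \<Rightarrow> bool" where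
  "Qc k g \<longleftrightarrow> (\<forall>l < k - 1. even (level_index g l)) \<and> even (half k False g) \<and> even (half k True g)"

lemma Qc_derived: assumes "k \<ge> 2" "c \<in> derived (G_grp k) (carrier (G_grp k))" shows "Qc k c"
  unfolding Qc_def using parhom_derived[OF parhom_lev assms(2)] parhom_derived[OF parhom_half[OF assms(1)] assms(2)]
  by auto

lemma Qc_comp: assumes "k \<ge> 2" "Qc k g" "Qc k c" "g \<in> carrier (G_grp k)" "c \<in> carrier (G_grp k)"
  shows "Qc k (g \<circ> c)"
proof -
  have "\<And>l. l < k - 1 \<Longrightarrow> parhom k (\<lambda>g. level_index g l)" using parhom_lev by simp
  then show ?thesis using assms parhom_half[OF assms(1)] unfolding Qc_def parhom_def by blast
qed

lemma back_ind: assumes "k \<ge> 2"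
  shows "n \<le> k \<Longrightarrow> g \<in> carrier (G_grp k) \<Longrightarrow> Qc k g \<Longrightarrow> (\<forall>v. length v < k - n \<longrightarrow> \<not> active g v)
    \<Longrightarrow> g \<in> derived (G_grp k) (carrier (G_grp k))"
proof (induction n arbitrary: g)
  case 0
  have ta: "tree_aut k g" using 0 by (simp add: G_carrier)
  have "g = id" by (rule ta_ext[OF ta ta_id]) (use 0 active_id in auto)
  then show ?case using derived_id by metis
next
  case (Suc n)
  interpret G: group "G_grp k" by (rule G_group)
  define l where "l = k - Suc n"
  have lk: "l < k" "Suc l = k - n" using Suc.prems(1) unfolding l_def by auto
  have ta: "tree_aut k g" using Suc.prems by (simp add: G_carrier)
  define S where "S = {v. length v = l \<and> active g v}"
  have Ssub: "S \<subseteq> {v. length v = l}" by (auto simp: S_def)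
  have c1: "l < k - 1 \<longrightarrow> even (card S)" using Suc.prems(3) unfolding Qc_def S_def level_index_def by auto
  have "\<And>b. {v\<in>S. take 1 v = [b]} = {v. length v = l \<and> take 1 v = [b] \<and> active g v}" by (auto simp: S_def)
  then have c2: "l = k - 1 \<longrightarrow> even (card {v\<in>S. take 1 v = [False]}) \<and> even (card {v\<in>S. take 1 v = [True]})"
    using Suc.prems(3) unfolding Qc_def half_def by auto
  obtain c where c: "W k l c S" using W_set[OF assms lk(1) Ssub c1 c2] by blast
  have cder: "c \<in> derived (G_grp k) (carrier (G_grp k))" using c by (simp add: W_def)
  have ccar: "c \<in> carrier (G_grp k)" by (rule derived_carrier[OF cder])
  have cta: "tree_aut k c" using ccar by (simp add: G_carrier)
  have hcar: "g \<circ> c \<in> carrier (G_grp k)" using G.m_closed[OF Suc.prems(2) ccar] by (simp add: G_mult)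
  have hQ: "Qc k (g \<circ> c)" by (rule Qc_comp[OF assms Suc.prems(3) Qc_derived[OF assms cder] Suc.prems(2) ccar])
  have hact: "\<forall>v. length v < k - n \<longrightarrow> \<not> active (g \<circ> c) v"
  proof (intro allI impI)
    fix v :: "bool list" assume "length v < k - n"
    then have lv: "length v \<le> l" using lk by simp
    have cv: "c v = v" by (rule ta_fix_low[OF cta _ _ lv]) (use c lk in \<open>auto simp: W_def\<close>)
    have "active (g \<circ> c) v = (active c v \<noteq> active g v)"
      using active_comp[OF ta cta, of v] cv lv lk by simp
    moreover have "length v < l \<Longrightarrow> \<not> active g v" using Suc.prems(4) l_def by auto
    ultimately show "\<not> active (g \<circ> c) v" using c lv by (cases "length v = l") (auto simp: W_def S_def)
  qed
  have hder: "g \<circ> c \<in> derived (G_grp k) (carrier (G_grp k))"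
    by (rule Suc.IH[OF _ hcar hQ hact]) (use Suc.prems in simp)
  have "g = (g \<circ> c) \<circ> inv\<^bsub>G_grp k\<^esub> c"
  proof -
    have "g \<otimes>\<^bsub>G_grp k\<^esub> c \<otimes>\<^bsub>G_grp k\<^esub> inv\<^bsub>G_grp k\<^esub> c = g"
      using Suc.prems(2) ccar by (simp add: G.m_assoc)
    then show ?thesis by (simp add: G_mult)
  qed
  then show ?case using derived_mult[OF hder derived_inv[OF cder]] by simp
qed

theorem lemma8:
  fixes k :: nat and g :: "bool list \<Rightarrow> bool list"
  assumes "k \<ge> 2" and "g \<in> carrier (G_grp k)"
  shows "g \<in> derived (G_grp k) (carrier (G_grp k)) \<longleftrightarrow>
    ((\<forall>l < k - 1. even (level_index g l)) \<and>
     even (card {v. length v = k - 1 \<and> take 1 v = [False] \<and> active g v}) \<and>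
     even (card {v. length v = k - 1 \<and> take 1 v = [True] \<and> active g v}))"
proof -
  have "g \<in> derived (G_grp k) (carrier (G_grp k)) \<longleftrightarrow> Qc k g"
  proof
    assume "g \<in> derived (G_grp k) (carrier (G_grp k))"
    then show "Qc k g" by (rule Qc_derived[OF assms(1)])
  next
    assume "Qc k g"
    then show "g \<in> derived (G_grp k) (carrier (G_grp k))"
      using back_ind[OF assms(1) _ assms(2), of k] by simp
  qed
  then show ?thesis unfolding Qc_def half_def .
qed

end
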